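(* Let $t$ be a positive integer and let $\mathcal{B}$ be a bramble of order at least $2t+1$ in a graph $G$. Then there exist (1) two vertex-disjoint paths $P_1$ and $P_2$ in $G$ such that both $\mathcal{B}_{V(P_1)}$ and $\mathcal{B}_{V(P_2)}$ have order exactly $t$, and (2) pairwise vertex-disjoint paths $Q_1,\dots,Q_t$ in $G$, each of which has one endpoint on $P_1$ and one endpoint on $P_2$ and is internally disjoint from $P_1\cup P_2$.
   Context: All graphs are finite and simple. A bramble $\mathcal{B}$ in a graph $G$ is a family of connected subgraphs of $G$ such that every two of them share a vertex or are joined by an edge of $G$. A hitting set for $\mathcal{B}$ is a set of vertices intersecting every element of $\mathcal{B}$; the order of $\mathcal{B}$ is the minimum size of a hitting set. Any subset of a bramble is a bramble. For $X\subseteq V(G)$, $\mathcal{B}_X$ denotes the set of elements of $\mathcal{B}$ that intersect $X$. *)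

theory Defs
  imports Main
begin

definition graph :: "'a set \<Rightarrow> ('a \<Rightarrow> 'a \<Rightarrow> bool) \<Rightarrow> bool" where
  "graph V E \<longleftrightarrow> finite V \<and> (\<forall>u v. E u v \<longrightarrow> E v u) \<and> (\<forall>v. \<not> E v v)
     \<and> (\<forall>u v. E u v \<longrightarrow> u \<in> V \<and> v \<in> V)"

definition is_path :: "'a set \<Rightarrow> ('a \<Rightarrow> 'a \<Rightarrow> bool) \<Rightarrow> 'a list \<Rightarrow> bool" where
  "is_path V E p \<longleftrightarrow> p \<noteq> [] \<and> distinct p \<and> set p \<subseteq> V
     \<and> (\<forall>i. Suc i < length p \<longrightarrow> E (p ! i) (p ! Suc i))"

definition inner_vertices :: "'a list \<Rightarrow> 'a set" where
  "inner_vertices p = set (butlast (tl p))"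

definition connected_set :: "'a set \<Rightarrow> ('a \<Rightarrow> 'a \<Rightarrow> bool) \<Rightarrow> 'a set \<Rightarrow> bool" where
  "connected_set V E X \<longleftrightarrow> X \<noteq> {} \<and> X \<subseteq> V \<and>
     (\<forall>u\<in>X. \<forall>v\<in>X. \<exists>p. is_path V E p \<and> set p \<subseteq> X \<and> hd p = u \<and> last p = v)"

definition touch :: "('a \<Rightarrow> 'a \<Rightarrow> bool) \<Rightarrow> 'a set \<Rightarrow> 'a set \<Rightarrow> bool" where
  "touch E X Y \<longleftrightarrow> X \<inter> Y \<noteq> {} \<or> (\<exists>u\<in>X. \<exists>v\<in>Y. E u v)"

text \<open>A bramble, with each connected subgraph represented by its vertex set.\<close>
definition bramble :: "'a set \<Rightarrow> ('a \<Rightarrow> 'a \<Rightarrow> bool) \<Rightarrow> 'a set set \<Rightarrow> bool" where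
  "bramble V E B \<longleftrightarrow> (\<forall>X\<in>B. connected_set V E X) \<and> (\<forall>X\<in>B. \<forall>Y\<in>B. touch E X Y)"

definition hitting_set :: "'a set \<Rightarrow> 'a set set \<Rightarrow> 'a set \<Rightarrow> bool" where
  "hitting_set V B S \<longleftrightarrow> S \<subseteq> V \<and> (\<forall>X\<in>B. S \<inter> X \<noteq> {})"

definition bramble_order :: "'a set \<Rightarrow> 'a set set \<Rightarrow> nat" where
  "bramble_order V B = (LEAST k. \<exists>S. hitting_set V B S \<and> card S = k)"

definition restrict_bramble :: "'a set set \<Rightarrow> 'a set \<Rightarrow> 'a set set" where
  "restrict_bramble B X = {Y \<in> B. Y \<inter> X \<noteq> {}}"

end

theory Submission
  imports Defs
begin

lemma is_path_alt:
  "is_path V E p \<longleftrightarrow> p \<noteq> [] \<and> distinct p \<and> set p \<subseteq> V \<and> successively E p"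
  unfolding is_path_def successively_conv_nth by auto

lemma walk_to_path:
  assumes "p \<noteq> []" "set p \<subseteq> V" "successively E p"
  shows "\<exists>q. is_path V E q \<and> hd q = hd p \<and> last q = last p \<and> set q \<subseteq> set p"
  using assms
proof (induction "length p" arbitrary: p rule: less_induct)
  case less
  show ?case
  proof (cases "distinct p")
    case True
    then show ?thesis using less.prems by (auto simp: is_path_alt)
  next
    case False
    then obtain xs ys zs y where p: "p = xs@[y]@ys@[y]@zs" using not_distinct_decomp by blast
    define p' where "p' = xs @ [y] @ zs"
    have "length p' < length p" using p p'_def by simp
    moreover have "p' \<noteq> []" "set p' \<subseteq> V" using less.prems p p'_def by auto
    moreover have "successively E p'"
      using less.prems(3) unfolding p p'_def
      by (auto simp: successively_append_iff successively_Cons)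
    ultimately obtain q where q: "is_path V E q \<and> hd q = hd p' \<and> last q = last p' \<and> set q \<subseteq> set p'"
      using less.hyps by blast
    have "hd p' = hd p" "last p' = last p" unfolding p p'_def by (cases xs; simp)+
    moreover have "set p' \<subseteq> set p" unfolding p p'_def by auto
    ultimately show ?thesis using q by (intro exI[of _ q]) auto
  qed
qed

lemma is_path_append:
  assumes "xs \<noteq> []" "ys \<noteq> []"
  shows "is_path V E (xs @ ys) \<longleftrightarrow> is_path V E xs \<and> is_path V E ys \<and> set xs \<inter> set ys = {}
     \<and> E (last xs) (hd ys)"
  using assms by (auto simp: is_path_alt successively_append_iff)

lemma is_path_prefix: "is_path V E (xs @ ys) \<Longrightarrow> xs \<noteq> [] \<Longrightarrow> is_path V E xs"
  by (cases "ys = []") (auto simp: is_path_append)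

lemma is_path_suffix: "is_path V E (xs @ ys) \<Longrightarrow> ys \<noteq> [] \<Longrightarrow> is_path V E ys"
  by (cases "xs = []") (auto simp: is_path_append)

lemma is_path_single[simp]: "is_path V E [v] \<longleftrightarrow> v \<in> V"
  by (auto simp: is_path_alt)

lemma is_path_rev:
  assumes "graph V E"
  shows "is_path V E (rev p) \<longleftrightarrow> is_path V E p"
proof -
  have sym: "E x y \<Longrightarrow> E y x" for x y using assms unfolding graph_def by blast
  have "successively (\<lambda>x y. E y x) p \<longleftrightarrow> successively E p"
    using successively_mono[of "\<lambda>x y. E y x" p E] successively_mono[of E p "\<lambda>x y. E y x"] sym
    by blast
  then show ?thesis unfolding is_path_alt by simp
qed

lemma is_path_mono:
  assumes "is_path V E p" "V \<subseteq> V'" "\<And>u v. E u v \<Longrightarrow> E' u v"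
  shows "is_path V' E' p"
  using assms by (auto simp: is_path_alt elim: successively_mono)

lemma is_path_restrict:
  assumes "is_path V E p" "set p \<subseteq> W"
  shows "is_path V (\<lambda>u v. E u v \<and> u \<in> W \<and> v \<in> W) p"
proof -
  have "successively E p" using assms by (auto simp: is_path_alt)
  then have "successively (\<lambda>u v. E u v \<and> u \<in> W \<and> v \<in> W) p"
    using assms(2) by (subst successively_cong[where Q=E]) auto
  then show ?thesis using assms by (auto simp: is_path_alt)
qed

lemma walk_append_path:
  assumes "is_path V E p" "is_path V E q" "last p = hd q"
  shows "\<exists>r. is_path V E r \<and> hd r = hd p \<and> last r = last q \<and> set r \<subseteq> set p \<union> set q"
proof -
  have "successively E (p @ tl q)"
    using assms by (cases q) (auto simp: is_path_alt successively_append_iff successively_Cons)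
  moreover have "p @ tl q \<noteq> []" "set (p @ tl q) \<subseteq> V" using assms
    by (auto simp: is_path_alt dest: list.set_sel(2))
  ultimately obtain r where r: "is_path V E r" "hd r = hd (p @ tl q)" "last r = last (p @ tl q)"
    "set r \<subseteq> set (p @ tl q)" using walk_to_path by blast
  have "hd (p @ tl q) = hd p" using assms by (auto simp: is_path_alt)
  moreover have "last (p @ tl q) = last q" using assms
    by (cases q; cases "tl q") (auto simp: is_path_alt)
  moreover have "set (p @ tl q) \<subseteq> set p \<union> set q" using assms by (cases q) auto
  ultimately show ?thesis using r by (intro exI[of _ r]) auto
qed

lemma walk_edge_path:
  assumes "is_path V E p" "is_path V E q" "E (last p) (hd q)"
  shows "\<exists>r. is_path V E r \<and> hd r = hd p \<and> last r = last q \<and> set r \<subseteq> set p \<union> set q"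
proof -
  have "successively E (p @ q)"
    using assms by (auto simp: is_path_alt successively_append_iff)
  moreover have "p @ q \<noteq> []" "set (p @ q) \<subseteq> V" using assms by (auto simp: is_path_alt)
  ultimately obtain r where r: "is_path V E r" "hd r = hd (p @ q)" "last r = last (p @ q)"
    "set r \<subseteq> set (p @ q)" using walk_to_path by blast
  then show ?thesis using assms by (intro exI[of _ r]) (auto simp: is_path_alt)
qed

lemma conn_touch_path:
  assumes "connected_set V E X" "connected_set V E Y" "touch E X Y" "a \<in> X" "b \<in> Y"
  shows "\<exists>p. is_path V E p \<and> hd p = a \<and> last p = b \<and> set p \<subseteq> X \<union> Y"
proof (cases "X \<inter> Y = {}")
  case False
  then obtain z where z: "z \<in> X" "z \<in> Y" by blast
  obtain p where p: "is_path V E p" "set p \<subseteq> X" "hd p = a" "last p = z"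
    using assms(1,4) z unfolding connected_set_def by blast
  obtain q where q: "is_path V E q" "set q \<subseteq> Y" "hd q = z" "last q = b"
    using assms(2,5) z unfolding connected_set_def by blast
  show ?thesis using walk_append_path[OF p(1) q(1)] p q by force
next
  case True
  then obtain u v where uv: "u \<in> X" "v \<in> Y" "E u v" using assms(3) unfolding touch_def by blast
  obtain p where p: "is_path V E p" "set p \<subseteq> X" "hd p = a" "last p = u"
    using assms(1,4) uv unfolding connected_set_def by blast
  obtain q where q: "is_path V E q" "set q \<subseteq> Y" "hd q = v" "last q = b"
    using assms(2,5) uv unfolding connected_set_def by blast
  show ?thesis using walk_edge_path[OF p(1) q(1)] p q uv by force
qed

section \<open>Bramble order\<close>

lemma order_le_card:
  assumes "finite V" "hitting_set V B S"
  shows "bramble_order V B \<le> card S"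
  unfolding bramble_order_def using assms by (auto intro: Least_le)

lemma order_attained:
  assumes "\<forall>X\<in>B. X \<inter> V \<noteq> {}"
  shows "\<exists>S. hitting_set V B S \<and> card S = bramble_order V B"
proof -
  have "hitting_set V B V" using assms unfolding hitting_set_def by auto
  then have "\<exists>k S. hitting_set V B S \<and> card S = k" by blast
  then show ?thesis unfolding bramble_order_def by (rule LeastI_ex)
qed

lemma order_geI:
  assumes "finite V" "\<forall>X\<in>B. X \<inter> V \<noteq> {}" "\<And>S. hitting_set V B S \<Longrightarrow> k \<le> card S"
  shows "k \<le> bramble_order V B"
  using order_attained[OF assms(2)] assms(3) by metis

lemma order_mono:
  assumes "finite V" "\<forall>X\<in>B2. X \<inter> V \<noteq> {}" "B1 \<subseteq> B2"
  shows "bramble_order V B1 \<le> bramble_order V B2"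
proof -
  obtain S where "hitting_set V B2 S" "card S = bramble_order V B2" using order_attained[OF assms(2)] by blast
  moreover then have "hitting_set V B1 S" using assms(3) unfolding hitting_set_def by auto
  ultimately show ?thesis using order_le_card[OF assms(1)] by metis
qed

lemma order_Un:
  assumes "finite V" "\<forall>X\<in>B1. X \<inter> V \<noteq> {}" "\<forall>X\<in>B2. X \<inter> V \<noteq> {}"
  shows "bramble_order V (B1 \<union> B2) \<le> bramble_order V B1 + bramble_order V B2"
proof -
  obtain S1 where S1: "hitting_set V B1 S1" "card S1 = bramble_order V B1" using order_attained[OF assms(2)] by blast
  obtain S2 where S2: "hitting_set V B2 S2" "card S2 = bramble_order V B2" using order_attained[OF assms(3)] by blast
  have "hitting_set V (B1 \<union> B2) (S1 \<union> S2)" using S1 S2 unfolding hitting_set_def by auto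
  then have "bramble_order V (B1 \<union> B2) \<le> card (S1 \<union> S2)" using order_le_card[OF assms(1)] by blast
  also have "\<dots> \<le> card S1 + card S2" by (rule card_Un_le)
  finally show ?thesis using S1 S2 by simp
qed

lemma order_vertex:
  assumes "finite V" "v \<in> V"
  shows "bramble_order V {X\<in>B. v \<in> X} \<le> 1"
proof -
  have "hitting_set V {X\<in>B. v \<in> X} {v}" using assms unfolding hitting_set_def by auto
  from order_le_card[OF assms(1) this] show ?thesis by simp
qed

lemma order_empty[simp]: "finite V \<Longrightarrow> bramble_order V {} = 0"
  using order_le_card[of V "{}" "{}"] by (simp add: hitting_set_def)

lemma restrict_insert:
  "restrict_bramble B (insert v X) = restrict_bramble B X \<union> {Y\<in>B. v \<in> Y}"
  unfolding restrict_bramble_def by auto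

section \<open>A path meeting every element of a bramble\<close>

lemma bramble_finite:
  assumes "graph V E" "bramble V E B"
  shows "finite B"
proof -
  have "B \<subseteq> Pow V" using assms unfolding bramble_def connected_set_def by auto
  moreover have "finite V" using assms unfolding graph_def by auto
  ultimately show ?thesis by (meson finite_Pow_iff finite_subset)
qed

lemma key_attach:
  assumes "graph V E" "bramble V E B" "Y \<in> B" "X \<in> B" "Y \<inter> set P \<noteq> {}" "X \<inter> set P = {}"
  shows "\<exists>q. is_path V E q \<and> hd q \<in> Y \<inter> set P \<and> last q \<in> X \<and> set (tl q) \<inter> set P = {}"
proof -
  obtain a where a: "a \<in> Y" "a \<in> set P" using assms(5) by blast
  have cX: "connected_set V E X" and cY: "connected_set V E Y" and t: "touch E Y X"
    using assms(2-4) unfolding bramble_def by auto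
  obtain b where b: "b \<in> X" using cX unfolding connected_set_def by blast
  obtain r where r: "is_path V E r" "hd r = a" "last r = b" "set r \<subseteq> Y \<union> X"
    using conn_touch_path[OF cY cX t a(1) b] by blast
  have "a \<in> set r" using r by (auto simp: is_path_alt)
  then obtain ys w zs where rs: "r = ys @ w # zs" "w \<in> set P" "\<forall>z\<in>set zs. z \<notin> set P"
    using split_list_last_prop[of r "\<lambda>z. z \<in> set P"] a by blast
  have qp: "is_path V E (w # zs)" using is_path_suffix[of V E ys "w # zs"] r(1) rs(1) by simp
  have "w \<in> Y" using rs r(4) assms(6) by auto
  moreover have "last (w # zs) = b" using r(3) rs(1) by simp
  ultimately show ?thesis using qp rs b by (intro exI[of _ "w # zs"]) auto
qed

lemma bramble_conn: "bramble V E B \<Longrightarrow> X \<in> B \<Longrightarrow> connected_set V E X"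
  unfolding bramble_def by blast

lemma bramble_touch: "bramble V E B \<Longrightarrow> X \<in> B \<Longrightarrow> Y \<in> B \<Longrightarrow> touch E X Y"
  unfolding bramble_def by blast

lemma conn_ne: "connected_set V E X \<Longrightarrow> X \<noteq> {}"
  unfolding connected_set_def by blast

lemma conn_sub: "connected_set V E X \<Longrightarrow> X \<subseteq> V"
  unfolding connected_set_def by blast

lemma path_hits_all:
  assumes "graph V E" "bramble V E B" "B \<noteq> {}"
  shows "\<exists>P. is_path V E P \<and> (\<forall>X\<in>B. X \<inter> set P \<noteq> {})"
proof -
  have finB: "finite B" using bramble_finite[OF assms(1,2)] .
  define f where "f P = card (restrict_bramble B (set P))" for P :: "'a list"
  have fin_r: "finite (restrict_bramble B S)" for S using finB unfolding restrict_bramble_def by auto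
  have fle: "f P \<le> card B" for P unfolding f_def restrict_bramble_def
    by (rule card_mono[OF finB]) auto
  obtain X0 where "X0 \<in> B" using assms(3) by blast
  then obtain v0 where "v0 \<in> V" using conn_ne[OF bramble_conn[OF assms(2)]] conn_sub[OF bramble_conn[OF assms(2)]] by blast
  then have "is_path V E [v0]" by simp
  moreover have "\<forall>y. is_path V E y \<longrightarrow> f y < card B + 1" using fle by (simp add: le_imp_less_Suc)
  ultimately obtain P where P: "is_path V E P" and max: "\<And>P'. is_path V E P' \<Longrightarrow> f P' \<le> f P"
    using ex_has_greatest_nat[of "is_path V E" "[v0]" f "card B + 1"] by blast
  show ?thesis
  proof (rule ccontr)
    assume "\<not> ?thesis"
    then obtain X where X: "X \<in> B" "X \<inter> set P = {}" using P by auto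
    have cX: "connected_set V E X" using bramble_conn[OF assms(2) X(1)] .
    show False
    proof (cases "restrict_bramble B (set P) = {}")
      case True
      obtain v where v: "v \<in> X" using conn_ne[OF cX] by blast
      then have "v \<in> V" using conn_sub[OF cX] by blast
      then have pv: "is_path V E [v]" by simp
      have "f [v] > 0" unfolding f_def using finB v X(1)
        by (subst card_gt_0_iff) (auto simp: restrict_bramble_def)
      have "f [v] \<le> f P" by (rule max[OF pv])
      moreover have "f P = 0" using True unfolding f_def by simp
      ultimately show False using \<open>f [v] > 0\<close> by simp
    next
      case False
      then obtain Y0 where Y0: "Y0 \<in> B" "Y0 \<inter> set P \<noteq> {}" unfolding restrict_bramble_def by blast
      define Pr where "Pr i \<longleftrightarrow> i < length P \<and> (\<exists>q. is_path V E q \<and> hd q = P ! i \<and> last q \<in> X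
          \<and> set (tl q) \<inter> set P = {})" for i
      have PrI: "Pr m" if "Y \<in> B" "Y \<inter> set P \<noteq> {}" "P ! m \<in> Y" "m < length P"
        "\<exists>q. is_path V E q \<and> hd q = P ! m \<and> last q \<in> X \<and> set (tl q) \<inter> set P = {}" for Y m
        using that unfolding Pr_def by blast
      have attach: "\<exists>m. Pr m \<and> P ! m \<in> Y" if YY: "Y \<in> B" "Y \<inter> set P \<noteq> {}" for Y
      proof -
        obtain q where q: "is_path V E q" "hd q \<in> Y \<inter> set P" "last q \<in> X" "set (tl q) \<inter> set P = {}"
          using key_attach[OF assms(1,2) YY(1) X(1) YY(2) X(2)] by blast
        then obtain m where m: "m < length P" "P ! m = hd q" by (auto simp: in_set_conv_nth)
        have "Pr m" unfolding Pr_def using m q by (auto intro!: exI[of _ q])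
        then show ?thesis using m q by auto
      qed
      obtain m0 where "Pr m0" using attach[OF Y0] by blast
      define i where "i = (LEAST i. Pr i)"
      have Pri: "Pr i" unfolding i_def using \<open>Pr m0\<close> by (rule LeastI)
      then obtain q where q: "i < length P" "is_path V E q" "hd q = P ! i" "last q \<in> X"
        "set (tl q) \<inter> set P = {}" unfolding Pr_def by blast
      have "q \<noteq> []" using q by (auto simp: is_path_alt)
      have tlq: "tl q \<noteq> []"
      proof
        assume "tl q = []"
        then have "q = [hd q]" using \<open>q \<noteq> []\<close> by (cases q) auto
        then have "last q = P ! i" using q(3) by (metis last.simps)
        then show False using q(1,4) X(2) by (metis disjoint_iff nth_mem)
      qed
      have qsplit: "q = [hd q] @ tl q" using \<open>q \<noteq> []\<close> by simp
      have "is_path V E ([hd q] @ tl q)" using q(2) qsplit by simp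
      then have ptl: "is_path V E (tl q)" and edge: "E (hd q) (hd (tl q))"
        using is_path_append[of "[hd q]" "tl q"] tlq by auto
      have dne: "drop i P \<noteq> []" using q(1) by simp
      have pd: "is_path V E (drop i P)" using is_path_suffix[of V E "take i P" "drop i P"] P(1) dne by simp
      then have prd: "is_path V E (rev (drop i P))" using is_path_rev[OF assms(1)] by blast
      have lastrd: "last (rev (drop i P)) = P ! i" using dne q(1) by (simp add: last_rev hd_drop_conv_nth)
      have "set (drop i P) \<subseteq> set P" by (rule set_drop_subset)
      then have disj: "set (rev (drop i P)) \<inter> set (tl q) = {}" using q(5) by auto
      define P' where "P' = rev (drop i P) @ tl q"
      have P'path: "is_path V E P'" unfolding P'_def
        using is_path_append[of "rev (drop i P)" "tl q" V E] prd ptl disj edge lastrd q(3) dne tlq by simp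
      have sub: "insert X (restrict_bramble B (set P)) \<subseteq> restrict_bramble B (set P')"
      proof
        fix Y assume "Y \<in> insert X (restrict_bramble B (set P))"
        then consider "Y = X" | "Y \<in> B" "Y \<inter> set P \<noteq> {}" unfolding restrict_bramble_def by blast
        then show "Y \<in> restrict_bramble B (set P')"
        proof cases
          case 1
          have "last (tl q) = last q" using tlq by (simp add: last_tl)
          then have "last q \<in> set (tl q)" using tlq by (metis last_in_set)
          then show ?thesis using 1 q(4) X(1) unfolding restrict_bramble_def P'_def by auto
        next
          case 2
          obtain m where m: "Pr m" "P ! m \<in> Y" using attach[OF 2] by blast
          have "i \<le> m" unfolding i_def using m(1) by (rule Least_le)
          moreover have "m < length P" using m(1) unfolding Pr_def by blast
          ultimately have "P ! m = drop i P ! (m - i)" "m - i < length (drop i P)" by auto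
          then have "P ! m \<in> set (drop i P)" by (metis nth_mem)
          then show ?thesis using 2 m(2) unfolding restrict_bramble_def P'_def by auto
        qed
      qed
      have "X \<notin> restrict_bramble B (set P)" using X unfolding restrict_bramble_def by auto
      then have "card (insert X (restrict_bramble B (set P))) = f P + 1"
        unfolding f_def using fin_r by simp
      moreover have "card (insert X (restrict_bramble B (set P))) \<le> f P'" unfolding f_def by (rule card_mono[OF fin_r sub])
      ultimately show False using max[OF P'path] by simp
    qed
  qed
qed

lemma restrict_sub: "restrict_bramble B X \<subseteq> B"
  unfolding restrict_bramble_def by auto

lemma prefix_order:
  assumes finV: "finite V" and BV: "\<forall>X\<in>B. X \<inter> V \<noteq> {}" and P: "is_path V E P"
    and t: "t \<le> bramble_order V (restrict_bramble B (set P))" "1 \<le> t"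
  shows "\<exists>n. 1 \<le> n \<and> n \<le> length P \<and> bramble_order V (restrict_bramble B (set (take n P))) = t"
proof -
  define g where "g n = bramble_order V (restrict_bramble B (set (take n P)))" for n
  have rV: "\<forall>X\<in>restrict_bramble B S. X \<inter> V \<noteq> {}" for S using BV restrict_sub by blast
  have g0: "g 0 = 0" unfolding g_def restrict_bramble_def using finV by simp
  have gstep: "g (Suc n) \<le> g n + 1" if "n < length P" for n
  proof -
    have "set (take (Suc n) P) = insert (P ! n) (set (take n P))"
      using that by (simp add: take_Suc_conv_app_nth)
    then have "g (Suc n) = bramble_order V (restrict_bramble B (set (take n P)) \<union> {Y\<in>B. P ! n \<in> Y})"
      unfolding g_def by (simp add: restrict_insert)
    also have "\<dots> \<le> g n + bramble_order V {Y\<in>B. P ! n \<in> Y}"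
      unfolding g_def by (rule order_Un[OF finV rV]) (use BV in auto)
    also have "bramble_order V {Y\<in>B. P ! n \<in> Y} \<le> 1"
      by (rule order_vertex[OF finV]) (use P that in \<open>auto simp: is_path_alt\<close>)
    finally show ?thesis by simp
  qed
  have "t \<le> g (length P)" unfolding g_def using t by simp
  define n where "n = (LEAST n. t \<le> g n)"
  have tn: "t \<le> g n" unfolding n_def by (rule LeastI[of _ "length P"]) fact
  have nle: "n \<le> length P" unfolding n_def by (rule Least_le) fact
  have "n \<noteq> 0" using tn g0 t(2) by (metis le_zero_eq not_one_le_zero)
  then obtain m where m: "n = Suc m" by (cases n) auto
  have "\<not> t \<le> g m" unfolding n_def using m n_def not_less_Least[of m "\<lambda>n. t \<le> g n"] by simp
  moreover have "g n \<le> g m + 1" using gstep[of m] m nle by simp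
  ultimately have "g n = t" using tn by simp
  then show ?thesis using nle m unfolding g_def by (intro exI[of _ n]) auto
qed

section \<open>Menger\<close>

definition sep :: "'a set \<Rightarrow> ('a \<Rightarrow> 'a \<Rightarrow> bool) \<Rightarrow> 'a set \<Rightarrow> 'a set \<Rightarrow> 'a set \<Rightarrow> bool" where
  "sep V E A B S \<longleftrightarrow> (\<forall>p. is_path V E p \<and> hd p \<in> A \<and> last p \<in> B \<longrightarrow> set p \<inter> S \<noteq> {})"

definition pathsys :: "'a set \<Rightarrow> ('a \<Rightarrow> 'a \<Rightarrow> bool) \<Rightarrow> 'a set \<Rightarrow> 'a set \<Rightarrow> 'a list set \<Rightarrow> nat \<Rightarrow> bool" where
  "pathsys V E A B P k \<longleftrightarrow> finite P \<and> card P = k \<and> (\<forall>p\<in>P. is_path V E p \<and> hd p \<in> A \<and> last p \<in> B)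
     \<and> (\<forall>p\<in>P. \<forall>q\<in>P. p \<noteq> q \<longrightarrow> set p \<inter> set q = {})"

definition del :: "('a \<Rightarrow> 'a \<Rightarrow> bool) \<Rightarrow> 'a \<Rightarrow> 'a \<Rightarrow> 'a \<Rightarrow> 'a \<Rightarrow> bool" where
  "del E x y = (\<lambda>u v. E u v \<and> {u, v} \<noteq> {x, y})"

lemma hd_last_in: "is_path V E p \<Longrightarrow> hd p \<in> set p \<and> last p \<in> set p"
  by (auto simp: is_path_alt)

lemma sep_rev:
  assumes "graph V E" "sep V E A B S"
  shows "sep V E B A S"
  unfolding sep_def
proof (intro allI impI)
  fix p assume p: "is_path V E p \<and> hd p \<in> B \<and> last p \<in> A"
  then have "p \<noteq> []" by (auto simp: is_path_alt)
  then have "is_path V E (rev p) \<and> hd (rev p) \<in> A \<and> last (rev p) \<in> B"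
    using p is_path_rev[OF assms(1)] by (simp add: hd_rev last_rev)
  then have "set (rev p) \<inter> S \<noteq> {}" using assms(2) unfolding sep_def by blast
  then show "set p \<inter> S \<noteq> {}" by simp
qed

lemma graph_del: "graph V E \<Longrightarrow> graph V (del E x y)"
  unfolding graph_def del_def by (auto simp: insert_commute)

lemma del_sym: "del E x y = del E y x"
  unfolding del_def by (auto simp: insert_commute)

lemma path_del_mono: "is_path V (del E x y) p \<Longrightarrow> is_path V E p"
  using is_path_mono[of V "del E x y" p V E] unfolding del_def by auto

lemma path_del:
  assumes "is_path V E p" "x \<notin> set p"
  shows "is_path V (del E x y) p"
proof -
  have "successively E p" using assms by (auto simp: is_path_alt)
  then have "successively (del E x y) p"
    by (rule successively_mono) (use assms(2) in \<open>auto simp: del_def doubleton_eq_iff\<close>)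
  then show ?thesis using assms by (auto simp: is_path_alt)
qed

lemma path_del':
  assumes "is_path V E p" "y \<notin> set p"
  shows "is_path V (del E x y) p"
  using path_del[OF assms] del_sym by metis

lemma bad_pair:
  "successively E q \<Longrightarrow> \<not> successively F q \<Longrightarrow> \<exists>ys u v zs. q = ys @ u # v # zs \<and> E u v \<and> \<not> F u v"
proof (induction q)
  case Nil then show ?case by simp
next
  case (Cons a q)
  show ?case
  proof (cases q)
    case Nil then show ?thesis using Cons by simp
  next
    case (Cons b q')
    show ?thesis
    proof (cases "F a b")
      case True
      then have "successively E q" "\<not> successively F q" using Cons.prems \<open>q = b # q'\<close> by auto
      then obtain ys u v zs where "q = ys @ u # v # zs" "E u v" "\<not> F u v" using Cons.IH by blast
      then show ?thesis by (intro exI[of _ "a # ys"]) auto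
    next
      case False
      then show ?thesis using Cons.prems \<open>q = b # q'\<close> by (intro exI[of _ "[]"]) auto
    qed
  qed
qed

lemma edges_finite: "graph V E \<Longrightarrow> finite {(u, v). E u v}"
proof -
  assume g: "graph V E"
  then have "{(u, v). E u v} \<subseteq> V \<times> V" unfolding graph_def by auto
  moreover have "finite (V \<times> V)" using g unfolding graph_def by auto
  ultimately show ?thesis by (rule finite_subset)
qed

lemma edges_del_less:
  assumes "graph V E" "E x y"
  shows "card {(u, v). del E x y u v} < card {(u, v). E u v}"
proof (rule psubset_card_mono[OF edges_finite[OF assms(1)]])
  show "{(u, v). del E x y u v} \<subset> {(u, v). E u v}"
    using assms(2) unfolding del_def by auto
qed

lemma single_path_noedge:
  assumes "is_path V E p" "\<forall>u v. \<not> E u v"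
  shows "p = [hd p]"
proof -
  have "p \<noteq> []" using assms by (auto simp: is_path_alt)
  moreover have "length p < 2"
  proof (rule ccontr)
    assume "\<not> length p < 2"
    then have "E (p ! 0) (p ! Suc 0)" using assms(1) unfolding is_path_def by auto
    then show False using assms(2) by auto
  qed
  ultimately show ?thesis by (cases p) auto
qed

lemma trim_path:
  assumes "is_path V E p" "hd p \<in> A" "last p \<in> B"
  shows "\<exists>q. is_path V E q \<and> hd q \<in> A \<and> last q \<in> B \<and> set q \<subseteq> set p \<and>
    set (tl q) \<inter> A = {} \<and> set (butlast q) \<inter> B = {}"
proof -
  have "hd p \<in> set p" using hd_last_in[OF assms(1)] by blast
  then obtain ys a zs where p: "p = ys @ a # zs" "a \<in> A" "\<forall>z\<in>set zs. z \<notin> A"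
    using split_list_last_prop[of p "\<lambda>z. z \<in> A"] assms(2) by blast
  have "last (a # zs) \<in> B" using assms(3) p(1) by simp
  then have "\<exists>z\<in>set (a # zs). z \<in> B" using last_in_set by blast
  then obtain us b ws where u: "a # zs = us @ b # ws" "b \<in> B" "\<forall>z\<in>set us. z \<notin> B"
    using split_list_first_prop[of "a # zs" "\<lambda>z. z \<in> B"] by blast
  define q where "q = us @ [b]"
  have pa: "is_path V E (a # zs)" using is_path_suffix[of V E ys "a # zs"] assms(1) p(1) by simp
  then have "is_path V E (us @ [b] @ ws)" using u(1) by simp
  then have qp: "is_path V E q" unfolding q_def using is_path_prefix[of V E "us @ [b]" ws] by simp
  have hq: "hd q \<in> A"
  proof (cases us)
    case Nil then show ?thesis using u p unfolding q_def by simp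
  next
    case (Cons c us') then show ?thesis using u p unfolding q_def by simp
  qed
  have "set q \<subseteq> set (a # zs)" unfolding q_def u(1) by auto
  then have sq: "set q \<subseteq> set p" using p(1) by auto
  have "set (tl q) \<subseteq> set zs"
  proof (cases us)
    case Nil then show ?thesis unfolding q_def by simp
  next
    case (Cons c us') then show ?thesis using u(1) unfolding q_def by auto
  qed
  then have "set (tl q) \<inter> A = {}" using p(3) by auto
  moreover have "set (butlast q) \<inter> B = {}" using u(3) unfolding q_def by auto
  ultimately show ?thesis using qp hq sq u(2) unfolding q_def by (intro exI[of _ "us @ [b]"]) auto
qed

lemma trim_sys:
  assumes "pathsys V E A B P k"
  shows "\<exists>Q. pathsys V E A B Q k \<and> (\<forall>q\<in>Q. set (tl q) \<inter> A = {} \<and> set (butlast q) \<inter> B = {})"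
proof -
  have "\<forall>p\<in>P. \<exists>q. is_path V E q \<and> hd q \<in> A \<and> last q \<in> B \<and> set q \<subseteq> set p \<and>
    set (tl q) \<inter> A = {} \<and> set (butlast q) \<inter> B = {}"
    using assms trim_path unfolding pathsys_def by blast
  from bchoice[OF this] obtain f where f0: "\<forall>p\<in>P. is_path V E (f p) \<and> hd (f p) \<in> A \<and> last (f p) \<in> B \<and> set (f p) \<subseteq> set p \<and>
    set (tl (f p)) \<inter> A = {} \<and> set (butlast (f p)) \<inter> B = {}" by blast
  have f: "\<And>p. p \<in> P \<Longrightarrow> is_path V E (f p) \<and> hd (f p) \<in> A \<and> last (f p) \<in> B \<and> set (f p) \<subseteq> set p \<and>
    set (tl (f p)) \<inter> A = {} \<and> set (butlast (f p)) \<inter> B = {}" using f0 by blast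
  have disj: "set (f p) \<inter> set (f q) = {}" if "p \<in> P" "q \<in> P" "p \<noteq> q" for p q
  proof -
    have "set p \<inter> set q = {}" using assms that unfolding pathsys_def by blast
    moreover have "set (f p) \<subseteq> set p" "set (f q) \<subseteq> set q" using f that by blast+
    ultimately show ?thesis by blast
  qed
  have inj: "inj_on f P"
  proof (rule inj_onI)
    fix p q assume pq: "p \<in> P" "q \<in> P" "f p = f q"
    show "p = q"
    proof (rule ccontr)
      assume "p \<noteq> q"
      then have "set (f p) \<inter> set (f q) = {}" using disj pq by blast
      moreover have "f p \<noteq> []" using f[OF pq(1)] by (auto simp: is_path_alt)
      ultimately show False using pq(3) by simp
    qed
  qed
  have disj2: "\<forall>a\<in>f ` P. \<forall>b\<in>f ` P. a \<noteq> b \<longrightarrow> set a \<inter> set b = {}"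
  proof (intro ballI impI)
    fix a b assume "a \<in> f ` P" "b \<in> f ` P" "a \<noteq> b"
    then obtain p q where "p \<in> P" "q \<in> P" "a = f p" "b = f q" "p \<noteq> q" by blast
    then show "set a \<inter> set b = {}" using disj by blast
  qed
  have "card (f ` P) = k" using assms inj unfolding pathsys_def by (simp add: card_image)
  moreover have "finite (f ` P)" using assms unfolding pathsys_def by blast
  moreover have "\<forall>q\<in>f ` P. is_path V E q \<and> hd q \<in> A \<and> last q \<in> B" using f by blast
  ultimately have "pathsys V E A B (f ` P) k" unfolding pathsys_def using disj2 by blast
  moreover have "\<forall>q\<in>f ` P. set (tl q) \<inter> A = {} \<and> set (butlast q) \<inter> B = {}" using f by blast
  ultimately show ?thesis by blast
qed

lemma pathsys_mono:
  "pathsys V (del E x y) A B P k \<Longrightarrow> pathsys V E A B P k"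
proof -
  assume h: "pathsys V (del E x y) A B P k"
  have "\<forall>p\<in>P. is_path V E p \<and> hd p \<in> A \<and> last p \<in> B"
    using h path_del_mono[of V E x y] unfolding pathsys_def by blast
  then show ?thesis using h unfolding pathsys_def by blast
qed

lemma join_contra:
  assumes "sep V E' A B S" "is_path V E' u" "hd u \<in> A" "set u \<inter> S = {}"
    "is_path V E' w" "last u = hd w" "last w \<in> B" "set w \<inter> S = {}"
  shows False
proof -
  obtain r where r: "is_path V E' r" "hd r = hd u" "last r = last w" "set r \<subseteq> set u \<union> set w"
    using walk_append_path[OF assms(2,5,6)] by blast
  have "set r \<inter> S = {}" using r(4) assms(4,8) by blast
  moreover have "hd r \<in> A" using r(2) assms(3) by simp
  moreover have "last r \<in> B" using r(3) assms(7) by simp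
  ultimately show False using assms(1) r(1) unfolding sep_def by blast
qed

lemma claim_sep:
  assumes g: "graph V E" and sepS: "sep V (del E x y) A B S"
    and p: "is_path V E (p1 @ x # y # p2)" "hd (p1 @ x # y # p2) \<in> A"
      "last (p1 @ x # y # p2) \<in> B" "set (p1 @ x # y # p2) \<inter> S = {}"
    and T: "sep V (del E x y) A (insert x S) T"
  shows "sep V E A B T"
  unfolding sep_def
proof (intro allI impI)
  let ?E' = "del E x y"
  have dist: "distinct (p1 @ x # y # p2)" using p(1) by (simp add: is_path_alt)
  then have xy: "x \<noteq> y" "x \<notin> set p2" by auto
  have "is_path V E ((p1 @ [x]) @ (y # p2))" using p(1) by simp
  then have "is_path V E (y # p2)" by (rule is_path_suffix) simp
  then have yp: "is_path V ?E' (y # p2)" by (rule path_del) (use xy in auto)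
  have ylast: "last (y # p2) \<in> B" using p(3) by simp
  have yS: "set (y # p2) \<inter> S = {}" using p(4) by auto
  fix q assume q: "is_path V E q \<and> hd q \<in> A \<and> last q \<in> B"
  have "\<exists>w\<in>set q. w \<in> insert x S"
  proof (rule ccontr)
    assume "\<not> ?thesis"
    then have xq: "x \<notin> set q" and qS: "set q \<inter> S = {}" by auto
    have "is_path V ?E' q" using path_del[OF _ xq] q by blast
    then show False using sepS q qS unfolding sep_def by blast
  qed
  then obtain q1 w q3 where qs: "q = q1 @ w # q3" "w \<in> insert x S" "\<forall>z\<in>set q1. z \<notin> insert x S"
    using split_list_first_prop[of q "\<lambda>z. z \<in> insert x S"] by blast
  have "is_path V E ((q1 @ [w]) @ q3)" using q qs(1) by simp
  then have rE: "is_path V E (q1 @ [w])" by (rule is_path_prefix) simp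
  have hr: "hd (q1 @ [w]) \<in> A" using q qs(1) by (cases q1) auto
  have rE': "is_path V ?E' (q1 @ [w])"
  proof (cases "y \<in> set q1")
    case False
    show ?thesis
    proof (cases "w = y")
      case True
      have "x \<notin> set (q1 @ [w])" using qs(3) True xy by auto
      then show ?thesis using path_del[OF rE] by blast
    next
      case False
      have "y \<notin> set (q1 @ [w])" using False \<open>y \<notin> set q1\<close> by auto
      then show ?thesis using path_del'[OF rE] by blast
    qed
  next
    case True
    then obtain a b where q1s: "q1 = a @ y # b" by (meson split_list)
    have "is_path V E ((a @ [y]) @ (b @ w # q3))" using q qs(1) q1s by simp
    then have "is_path V E (a @ [y])" by (rule is_path_prefix) simp
    moreover have "x \<notin> set (a @ [y])" using qs(3) q1s by auto
    ultimately have ay: "is_path V ?E' (a @ [y])" by (rule path_del)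
    have "hd (a @ [y]) \<in> A" using q qs(1) q1s by (cases a) auto
    moreover have "set (a @ [y]) \<inter> S = {}" using qs(3) q1s by auto
    moreover have "last (a @ [y]) = hd (y # p2)" by simp
    ultimately have False using join_contra[OF sepS ay _ _ yp _ ylast yS] by blast
    then show ?thesis ..
  qed
  have "last (q1 @ [w]) \<in> insert x S" using qs(2) by simp
  then have "set (q1 @ [w]) \<inter> T \<noteq> {}" using T rE' hr unfolding sep_def by blast
  then show "set q \<inter> T \<noteq> {}" using qs(1) by auto
qed

lemma pathsys_inj_last:
  assumes "pathsys V E A B P k"
  shows "inj_on last P"
proof (rule inj_onI)
  fix p q assume pq: "p \<in> P" "q \<in> P" "last p = last q"
  show "p = q"
  proof (rule ccontr)
    assume "p \<noteq> q"
    then have "set p \<inter> set q = {}" using assms pq(1,2) unfolding pathsys_def by blast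
    moreover have "last p \<in> set p" "last q \<in> set q"
      using assms pq(1,2) hd_last_in unfolding pathsys_def by blast+
    ultimately show False using pq(3) by auto
  qed
qed

lemma pathsys_inj_hd:
  assumes "pathsys V E A B P k"
  shows "inj_on hd P"
proof (rule inj_onI)
  fix p q assume pq: "p \<in> P" "q \<in> P" "hd p = hd q"
  show "p = q"
  proof (rule ccontr)
    assume "p \<noteq> q"
    then have "set p \<inter> set q = {}" using assms pq(1,2) unfolding pathsys_def by blast
    moreover have "hd p \<in> set p" "hd q \<in> set q"
      using assms pq(1,2) hd_last_in unfolding pathsys_def by blast+
    ultimately show False using pq(3) by auto
  qed
qed

lemma pathsys_last_eq:
  assumes "pathsys V E A B P k" "finite B" "card B \<le> k"
  shows "last ` P = B"
proof (rule card_seteq[OF assms(2)])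
  show "last ` P \<subseteq> B" using assms(1) unfolding pathsys_def by blast
  have "card (last ` P) = k" using card_image[OF pathsys_inj_last[OF assms(1)]] assms(1)
    unfolding pathsys_def by simp
  then show "card B \<le> card (last ` P)" using assms(3) by simp
qed

lemma pathsys_hd_eq:
  assumes "pathsys V E A B P k" "finite A" "card A \<le> k"
  shows "hd ` P = A"
proof (rule card_seteq[OF assms(2)])
  show "hd ` P \<subseteq> A" using assms(1) unfolding pathsys_def by blast
  have "card (hd ` P) = k" using card_image[OF pathsys_inj_hd[OF assms(1)]] assms(1)
    unfolding pathsys_def by simp
  then show "card A \<le> card (hd ` P)" using assms(3) by simp
qed

lemma menger_step:
  assumes g: "graph V E"
    and IH: "\<And>A B k. \<forall>S. S \<subseteq> V \<and> sep V (del E x y) A B S \<longrightarrow> k \<le> card S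
               \<Longrightarrow> \<exists>P. pathsys V (del E x y) A B P k"
    and hyp: "\<forall>S. S \<subseteq> V \<and> sep V E A B S \<longrightarrow> k \<le> card S"
    and S: "S \<subseteq> V" "sep V (del E x y) A B S" "card S < k"
    and p: "is_path V E (p1 @ x # y # p2)" "hd (p1 @ x # y # p2) \<in> A"
      "last (p1 @ x # y # p2) \<in> B" "set (p1 @ x # y # p2) \<inter> S = {}"
  shows "\<exists>P. pathsys V E A B P k"
proof -
  let ?E' = "del E x y"
  define X where "X = insert x S"
  define Y where "Y = insert y S"
  have dist: "distinct (p1 @ x # y # p2)" using p(1) by (simp add: is_path_alt)
  then have xy: "x \<noteq> y" by auto
  have xS: "x \<notin> S" and yS: "y \<notin> S" using p(4) by auto
  have Exy: "E x y"
  proof -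
    have "successively E ((p1 @ [x]) @ (y # p2))" using p(1) by (simp add: is_path_alt)
    then show ?thesis by (simp add: successively_append_iff)
  qed
  have finV: "finite V" using g unfolding graph_def by blast
  have finS: "finite S" using finite_subset[OF S(1) finV] .
  have g': "graph V ?E'" by (rule graph_del[OF g])
  have cX: "\<forall>T. T \<subseteq> V \<and> sep V ?E' A X T \<longrightarrow> k \<le> card T"
  proof (intro allI impI)
    fix T assume T: "T \<subseteq> V \<and> sep V ?E' A X T"
    then have "sep V E A B T" using claim_sep[OF g S(2) p] unfolding X_def by blast
    then show "k \<le> card T" using hyp T by blast
  qed
  have cY: "\<forall>T. T \<subseteq> V \<and> sep V ?E' Y B T \<longrightarrow> k \<le> card T"
  proof (intro allI impI)
    fix T assume T: "T \<subseteq> V \<and> sep V ?E' Y B T"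
    have e: "del E y x = ?E'" by (rule del_sym)
    have s1: "sep V (del E y x) B A S" using sep_rev[OF g' S(2)] e by simp
    have rp: "rev (p1 @ x # y # p2) = rev p2 @ y # x # rev p1" by simp
    have r1: "is_path V E (rev p2 @ y # x # rev p1)"
      using is_path_rev[OF g, of "p1 @ x # y # p2"] p(1) rp by simp
    have ne: "p1 @ x # y # p2 \<noteq> []" by simp
    have r2: "hd (rev p2 @ y # x # rev p1) \<in> B"
      using p(3) hd_rev[of "p1 @ x # y # p2"] rp by simp
    have r3: "last (rev p2 @ y # x # rev p1) \<in> A"
      using p(2) last_rev[of "p1 @ x # y # p2"] rp by simp
    have r4: "set (rev p2 @ y # x # rev p1) \<inter> S = {}" using p(4) by auto
    have "sep V ?E' B Y T" using sep_rev[OF g'] T by blast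
    then have s2: "sep V (del E y x) B (insert y S) T" using e unfolding Y_def by simp
    have "sep V E B A T" by (rule claim_sep[OF g s1 r1 r2 r3 r4 s2])
    then have "sep V E A B T" by (rule sep_rev[OF g])
    then show "k \<le> card T" using hyp T by blast
  qed
  obtain P0 where P0: "pathsys V ?E' A X P0 k" using IH cX by blast
  obtain R0 where R0: "pathsys V ?E' Y B R0 k" using IH cY by blast
  obtain P where P: "pathsys V ?E' A X P k" and Pt: "\<forall>q\<in>P. set (tl q) \<inter> A = {} \<and> set (butlast q) \<inter> X = {}"
    using trim_sys[OF P0] by blast
  obtain R where R: "pathsys V ?E' Y B R k" and Rt: "\<forall>q\<in>R. set (tl q) \<inter> Y = {} \<and> set (butlast q) \<inter> B = {}"
    using trim_sys[OF R0] by blast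
  have Pp: "is_path V ?E' q" "hd q \<in> A" "last q \<in> X" if "q \<in> P" for q
    using P that unfolding pathsys_def by blast+
  have Rp: "is_path V ?E' r" "hd r \<in> Y" "last r \<in> B" if "r \<in> R" for r
    using R that unfolding pathsys_def by blast+
  have Pd: "set q1 \<inter> set q2 = {}" if "q1 \<in> P" "q2 \<in> P" "q1 \<noteq> q2" for q1 q2
    using P that unfolding pathsys_def by blast
  have Rd: "set q1 \<inter> set q2 = {}" if "q1 \<in> R" "q2 \<in> R" "q1 \<noteq> q2" for q1 q2
    using R that unfolding pathsys_def by blast
  have cardX: "card X \<le> k" unfolding X_def using finS S(3) by (simp add: card_insert_if)
  have cardY: "card Y \<le> k" unfolding Y_def using finS S(3) by (simp add: card_insert_if)
  have lastP: "last ` P = X" by (rule pathsys_last_eq[OF P _ cardX]) (simp add: X_def finS)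
  have hdR: "hd ` R = Y" by (rule pathsys_hd_eq[OF R _ cardY]) (simp add: Y_def finS)
  have injl: "inj_on last P" by (rule pathsys_inj_last[OF P])
  have injh: "inj_on hd R" by (rule pathsys_inj_hd[OF R])
  have cross: "v \<in> S \<and> v = last q \<and> v = hd r"
    if qr: "q \<in> P" "r \<in> R" "v \<in> set q" "v \<in> set r" for q r v
  proof -
    have vS: "v \<in> S"
    proof (rule ccontr)
      assume vS: "v \<notin> S"
      obtain qa qb where q: "q = qa @ v # qb" using split_list[OF qr(3)] by blast
      obtain ra rb where r: "r = ra @ v # rb" using split_list[OF qr(4)] by blast
      have "is_path V ?E' ((qa @ [v]) @ qb)" using Pp(1)[OF qr(1)] q by simp
      then have u: "is_path V ?E' (qa @ [v])" by (rule is_path_prefix) simp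
      have hu: "hd (qa @ [v]) \<in> A" using Pp(2)[OF qr(1)] q by (cases qa) auto
      have "set qa \<subseteq> set (butlast q)" unfolding q by (simp add: butlast_append)
      then have "set qa \<inter> S = {}" using Pt qr(1) unfolding X_def by blast
      then have su: "set (qa @ [v]) \<inter> S = {}" using vS by simp
      have "is_path V ?E' (ra @ (v # rb))" using Rp(1)[OF qr(2)] r by simp
      then have w: "is_path V ?E' (v # rb)" by (rule is_path_suffix) simp
      have lw: "last (v # rb) \<in> B" using Rp(3)[OF qr(2)] r by simp
      have "set rb \<subseteq> set (tl r)" unfolding r by (cases ra) auto
      then have "set rb \<inter> S = {}" using Rt qr(2) unfolding Y_def by blast
      then have sw: "set (v # rb) \<inter> S = {}" using vS by simp
      show False using join_contra[OF S(2) u hu su w _ lw sw] by simp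
    qed
    have qne: "q \<noteq> []" using Pp(1)[OF qr(1)] by (simp add: is_path_alt)
    have "v \<notin> set (butlast q)" using Pt qr(1) vS unfolding X_def by blast
    moreover have "set q = set (butlast q) \<union> {last q}"
      using qne by (metis append_butlast_last_id set_append empty_set list.simps(15))
    ultimately have vl: "v = last q" using qr(3) by blast
    have rne: "r \<noteq> []" using Rp(1)[OF qr(2)] by (simp add: is_path_alt)
    have "v \<notin> set (tl r)" using Rt qr(2) vS unfolding Y_def by blast
    moreover have "set r = insert (hd r) (set (tl r))" using rne by (cases r) auto
    ultimately have vh: "v = hd r" using qr(4) by blast
    show ?thesis using vS vl vh by blast
  qed
  define \<tau> where "\<tau> q = (if last q = x then y else last q)" for q
  have \<tau>Y: "\<tau> q \<in> Y" if "q \<in> P" for q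
    using Pp(3)[OF that] unfolding \<tau>_def X_def Y_def by auto
  have \<tau>inj: "q1 = q2" if "q1 \<in> P" "q2 \<in> P" "\<tau> q1 = \<tau> q2" for q1 q2
  proof -
    have l1: "last q1 \<in> X" "last q2 \<in> X" using Pp(3) that(1,2) by blast+
    have "last q1 = last q2"
    proof (cases "last q1 = x"; cases "last q2 = x")
      assume "last q1 = x" "last q2 = x" then show ?thesis by simp
    next
      assume "last q1 = x" "last q2 \<noteq> x"
      then have "y = last q2" using that(3) unfolding \<tau>_def by simp
      then show ?thesis using l1 \<open>last q2 \<noteq> x\<close> yS xy unfolding X_def by auto
    next
      assume "last q1 \<noteq> x" "last q2 = x"
      then have "y = last q1" using that(3) unfolding \<tau>_def by simp
      then show ?thesis using l1 \<open>last q1 \<noteq> x\<close> yS xy unfolding X_def by auto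
    next
      assume "last q1 \<noteq> x" "last q2 \<noteq> x"
      then show ?thesis using that(3) unfolding \<tau>_def by simp
    qed
    then show ?thesis using inj_onD[OF injl _ that(1,2)] by blast
  qed
  define gg where "gg q = inv_into R hd (\<tau> q)" for q
  have ggR: "gg q \<in> R" "hd (gg q) = \<tau> q" if "q \<in> P" for q
  proof -
    have "\<tau> q \<in> hd ` R" using \<tau>Y[OF that] hdR by simp
    then show "gg q \<in> R" "hd (gg q) = \<tau> q" unfolding gg_def
      by (auto intro: inv_into_into f_inv_into_f)
  qed
  define c where "c q = (if last q = x then q @ gg q else q @ tl (gg q))" for q
  have cprop: "is_path V E (c q) \<and> hd (c q) \<in> A \<and> last (c q) \<in> B \<and> set (c q) \<subseteq> set q \<union> set (gg q)"
    if qP: "q \<in> P" for q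
  proof -
    have qE': "is_path V ?E' q" using Pp(1)[OF qP] .
    then have qE: "is_path V E q" by (rule path_del_mono)
    have qne: "q \<noteq> []" using qE by (simp add: is_path_alt)
    have gR: "gg q \<in> R" using ggR(1)[OF qP] .
    have gE': "is_path V ?E' (gg q)" using Rp(1)[OF gR] .
    then have gE: "is_path V E (gg q)" by (rule path_del_mono)
    have gne: "gg q \<noteq> []" using gE by (simp add: is_path_alt)
    have lg: "last (gg q) \<in> B" using Rp(3)[OF gR] .
    have hq: "hd q \<in> A" using Pp(2)[OF qP] .
    show ?thesis
    proof (cases "last q = x")
      case True
      have hg: "hd (gg q) = y" using ggR(2)[OF qP] True unfolding \<tau>_def by simp
      have disj: "set q \<inter> set (gg q) = {}"
      proof (rule ccontr)
        assume "set q \<inter> set (gg q) \<noteq> {}"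
        then obtain v where "v \<in> set q" "v \<in> set (gg q)" by blast
        then have "v \<in> S" "v = last q" using cross[OF qP gR] by blast+
        then show False using True xS by simp
      qed
      have "is_path V E (q @ gg q)"
        using is_path_append[OF qne gne, of V E] qE gE disj True hg Exy by simp
      moreover have "hd (q @ gg q) = hd q" using qne by simp
      moreover have "last (q @ gg q) = last (gg q)" using gne by simp
      ultimately show ?thesis unfolding c_def using True hq lg by auto
    next
      case False
      have hg: "hd (gg q) = last q" using ggR(2)[OF qP] False unfolding \<tau>_def by simp
      show ?thesis
      proof (cases "tl (gg q) = []")
        case True
        have "gg q = [hd (gg q)]" using gne True by (cases "gg q") auto
        then have "last (gg q) = last q" using hg by (metis last.simps)
        then show ?thesis unfolding c_def using False True qE hq lg by auto
      next
        case tne: False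
        have gs: "gg q = [hd (gg q)] @ tl (gg q)" using gne by simp
        then have "is_path V E ([hd (gg q)] @ tl (gg q))" using gE by simp
        then have tp: "is_path V E (tl (gg q))" and ed: "E (hd (gg q)) (hd (tl (gg q)))"
          using is_path_append[of "[hd (gg q)]" "tl (gg q)" V E] tne by auto
        have dg: "distinct (gg q)" using gE by (simp add: is_path_alt)
        have disj: "set q \<inter> set (tl (gg q)) = {}"
        proof (rule ccontr)
          assume "set q \<inter> set (tl (gg q)) \<noteq> {}"
          then obtain v where v: "v \<in> set q" "v \<in> set (tl (gg q))" by blast
          then have "v \<in> set (gg q)" using list.set_sel(2)[OF gne] by blast
          then have "v = hd (gg q)" using cross[OF qP gR v(1)] by blast
          moreover have "hd (gg q) \<notin> set (tl (gg q))" using dg gne by (cases "gg q") auto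
          ultimately show False using v(2) by simp
        qed
        have "is_path V E (q @ tl (gg q))"
          using is_path_append[OF qne tne, of V E] qE tp disj hg ed by simp
        moreover have "hd (q @ tl (gg q)) = hd q" using qne by simp
        moreover have "last (q @ tl (gg q)) = last (gg q)" using tne by (simp add: last_tl)
        moreover have "set (tl (gg q)) \<subseteq> set (gg q)" using list.set_sel(2)[OF gne] by blast
        ultimately show ?thesis unfolding c_def using False hq lg by auto
      qed
    qed
  qed
  have cdisj: "set (c q1) \<inter> set (c q2) = {}" if qq: "q1 \<in> P" "q2 \<in> P" "q1 \<noteq> q2" for q1 q2
  proof (rule ccontr)
    assume "set (c q1) \<inter> set (c q2) \<noteq> {}"
    then obtain v where v1: "v \<in> set q1 \<union> set (gg q1)" and v2: "v \<in> set q2 \<union> set (gg q2)"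
      using cprop[OF qq(1)] cprop[OF qq(2)] by blast
    have g1: "gg q1 \<in> R" and g2: "gg q2 \<in> R" using ggR qq by blast+
    have gne: "gg q1 \<noteq> gg q2"
    proof
      assume "gg q1 = gg q2"
      then have "\<tau> q1 = \<tau> q2" using ggR(2)[OF qq(1)] ggR(2)[OF qq(2)] by simp
      then show False using \<tau>inj[OF qq(1,2)] qq(3) by simp
    qed
    have mixed: "False" if a: "qa \<in> P" "qb \<in> P" "qa \<noteq> qb" "v \<in> set qa" "v \<in> set (gg qb)" for qa qb
    proof -
      have "v \<in> S" "v = last qa" "v = hd (gg qb)" using cross[OF a(1) ggR(1)[OF a(2)] a(4,5)] by blast+
      moreover have "hd (gg qb) = \<tau> qb" using ggR(2)[OF a(2)] .
      ultimately have "\<tau> qb = last qa" "\<tau> qb \<in> S" by simp_all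
      then have "last qb = last qa" using yS unfolding \<tau>_def by (auto split: if_splits)
      then show False using inj_onD[OF injl _ a(2) a(1)] a(3) by metis
    qed
    show False
    proof (cases "v \<in> set q1")
      case True
      show False
      proof (cases "v \<in> set q2")
        case True
        then show False using Pd[OF qq] \<open>v \<in> set q1\<close> by blast
      next
        case False
        then have "v \<in> set (gg q2)" using v2 by blast
        then show False using mixed[OF qq \<open>v \<in> set q1\<close>] by blast
      qed
    next
      case False
      then have vg1: "v \<in> set (gg q1)" using v1 by blast
      show False
      proof (cases "v \<in> set q2")
        case True
        then show False using mixed[OF qq(2) qq(1) _ True vg1] qq(3) by blast
      next
        case False
        then have "v \<in> set (gg q2)" using v2 by blast
        then show False using Rd[OF g1 g2 gne] vg1 by blast
      qed
    qed
  qed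
  have cinj: "inj_on c P"
  proof (rule inj_onI)
    fix q1 q2 assume qq: "q1 \<in> P" "q2 \<in> P" "c q1 = c q2"
    show "q1 = q2"
    proof (rule ccontr)
      assume "q1 \<noteq> q2"
      then have "set (c q1) \<inter> set (c q2) = {}" using cdisj qq(1,2) by blast
      moreover have "c q1 \<noteq> []" using cprop[OF qq(1)] by (simp add: is_path_alt)
      ultimately show False using qq(3) by simp
    qed
  qed
  have "finite P" "card P = k" using P unfolding pathsys_def by blast+
  then have "finite (c ` P)" "card (c ` P) = k" using card_image[OF cinj] by auto
  moreover have "\<forall>q\<in>c ` P. is_path V E q \<and> hd q \<in> A \<and> last q \<in> B" using cprop by blast
  moreover have "\<forall>a\<in>c ` P. \<forall>b\<in>c ` P. a \<noteq> b \<longrightarrow> set a \<inter> set b = {}"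
  proof (intro ballI impI)
    fix a b assume "a \<in> c ` P" "b \<in> c ` P" "a \<noteq> b"
    then obtain q1 q2 where "q1 \<in> P" "q2 \<in> P" "a = c q1" "b = c q2" "q1 \<noteq> q2" by blast
    then show "set a \<inter> set b = {}" using cdisj by blast
  qed
  ultimately have "pathsys V E A B (c ` P) k" unfolding pathsys_def by blast
  then show ?thesis by blast
qed

lemma menger:
  assumes "graph V E" "\<forall>S. S \<subseteq> V \<and> sep V E A B S \<longrightarrow> k \<le> card S"
  shows "\<exists>P. pathsys V E A B P k"
  using assms
proof (induction "card {(u, v). E u v}" arbitrary: E A B k rule: less_induct)
  case less
  note g = less.prems(1)
  show ?case
  proof (cases "\<exists>a b. E a b")
    case False
    then have noe: "\<forall>u v. \<not> E u v" by blast
    define T where "T = A \<inter> B \<inter> V"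
    have "sep V E A B T" unfolding sep_def
    proof (intro allI impI)
      fix p assume p: "is_path V E p \<and> hd p \<in> A \<and> last p \<in> B"
      then have p1: "p = [hd p]" using single_path_noedge noe by blast
      then have "hd p \<in> V" using p by (metis is_path_single)
      moreover have "last p = hd p" using p1 by (metis last.simps)
      ultimately have "hd p \<in> T" using p unfolding T_def by auto
      then show "set p \<inter> T \<noteq> {}" using p1 by (metis disjoint_iff list.set_intros(1))
    qed
    moreover have "T \<subseteq> V" unfolding T_def by blast
    ultimately have "k \<le> card T" using less.prems(2) by blast
    then obtain T' where T': "T' \<subseteq> T" "card T' = k" "finite T'" by (rule obtain_subset_with_card_n)
    define P where "P = (\<lambda>v. [v]) ` T'"
    have "inj_on (\<lambda>v. [v]) T'" by (rule inj_onI) simp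
    then have "card P = k" "finite P" unfolding P_def using T' by (simp_all add: card_image)
    moreover have "\<forall>p\<in>P. is_path V E p \<and> hd p \<in> A \<and> last p \<in> B"
      unfolding P_def using T'(1) unfolding T_def by auto
    moreover have "\<forall>p\<in>P. \<forall>q\<in>P. p \<noteq> q \<longrightarrow> set p \<inter> set q = {}" unfolding P_def by auto
    ultimately show ?thesis unfolding pathsys_def by blast
  next
    case True
    then obtain a b where ab: "E a b" by blast
    have lt: "card {(u, v). del E a b u v} < card {(u, v). E u v}" by (rule edges_del_less[OF g ab])
    have g': "graph V (del E a b)" by (rule graph_del[OF g])
    have IH: "\<exists>P. pathsys V (del E a b) A' B' P k'"
      if "\<forall>S. S \<subseteq> V \<and> sep V (del E a b) A' B' S \<longrightarrow> k' \<le> card S" for A' B' k'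
      using less.hyps[OF lt g' that] .
    show ?thesis
    proof (cases "\<forall>S. S \<subseteq> V \<and> sep V (del E a b) A B S \<longrightarrow> k \<le> card S")
      case True
      then obtain P where "pathsys V (del E a b) A B P k" using IH by blast
      then have "pathsys V E A B P k" by (rule pathsys_mono)
      then show ?thesis by blast
    next
      case False
      then obtain S where S: "S \<subseteq> V" "sep V (del E a b) A B S" "card S < k"
        by (meson not_le)
      have "\<not> sep V E A B S" using less.prems(2) S by (meson not_le)
      then obtain p where p: "is_path V E p" "hd p \<in> A" "last p \<in> B" "set p \<inter> S = {}"
        unfolding sep_def by blast
      have "\<not> is_path V (del E a b) p" using S(2) p unfolding sep_def by blast
      then have "\<not> successively (del E a b) p" using p(1) by (simp add: is_path_alt)
      moreover have "successively E p" using p(1) by (simp add: is_path_alt)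
      ultimately obtain p1 x y p2 where pp: "p = p1 @ x # y # p2" "E x y" "\<not> del E a b x y"
        using bad_pair by blast
      then have "{x, y} = {a, b}" unfolding del_def by blast
      then have ed: "del E a b = del E x y" unfolding del_def by simp
      have IH': "\<exists>P. pathsys V (del E x y) A' B' P k'"
        if "\<forall>S. S \<subseteq> V \<and> sep V (del E x y) A' B' S \<longrightarrow> k' \<le> card S" for A' B' k'
        using IH[of A' B' k'] that ed by simp
      have q: "is_path V E (p1 @ x # y # p2)" "hd (p1 @ x # y # p2) \<in> A"
        "last (p1 @ x # y # p2) \<in> B" "set (p1 @ x # y # p2) \<inter> S = {}"
        using p unfolding pp(1) by blast+
      show ?thesis
        by (rule menger_step[OF g IH' less.prems(2) S(1) S(2)[unfolded ed] S(3) q])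
    qed
  qed
qed

lemma conn_restrict:
  assumes "connected_set V E X" "X \<subseteq> W"
  shows "connected_set W (\<lambda>u v. E u v \<and> u \<in> W \<and> v \<in> W) X"
  unfolding connected_set_def
proof (intro conjI ballI)
  show "X \<noteq> {}" using conn_ne[OF assms(1)] .
  show "X \<subseteq> W" by fact
  fix u v assume uv: "u \<in> X" "v \<in> X"
  then obtain p where p: "is_path V E p" "set p \<subseteq> X" "hd p = u" "last p = v"
    using assms(1) unfolding connected_set_def by blast
  have "is_path V (\<lambda>u v. E u v \<and> u \<in> W \<and> v \<in> W) p" using is_path_restrict[OF p(1)] p(2) assms(2) by blast
  then have "is_path W (\<lambda>u v. E u v \<and> u \<in> W \<and> v \<in> W) p" using p(2) assms(2) by (auto simp: is_path_alt)
  then show "\<exists>p. is_path W (\<lambda>u v. E u v \<and> u \<in> W \<and> v \<in> W) p \<and> set p \<subseteq> X \<and> hd p = u \<and> last p = v"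
    using p by blast
qed

lemma touch_restrict:
  assumes "touch E X Y" "X \<subseteq> W" "Y \<subseteq> W"
  shows "touch (\<lambda>u v. E u v \<and> u \<in> W \<and> v \<in> W) X Y"
  using assms unfolding touch_def by blast

theorem lemma2p5:
  fixes V :: "'a set" and E :: "'a \<Rightarrow> 'a \<Rightarrow> bool" and B :: "'a set set" and t :: nat
  assumes "graph V E"
    and "bramble V E B"
    and "t \<ge> 1"
    and "bramble_order V B \<ge> 2 * t + 1"
  shows "\<exists>P1 P2 Q.
     is_path V E P1 \<and> is_path V E P2 \<and> set P1 \<inter> set P2 = {} \<and>
     bramble_order V (restrict_bramble B (set P1)) = t \<and>
     bramble_order V (restrict_bramble B (set P2)) = t \<and>
     (\<forall>i<t. is_path V E (Q i) \<and>
        ((hd (Q i) \<in> set P1 \<and> last (Q i) \<in> set P2) \<or>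
         (hd (Q i) \<in> set P2 \<and> last (Q i) \<in> set P1)) \<and>
        inner_vertices (Q i) \<inter> (set P1 \<union> set P2) = {}) \<and>
     (\<forall>i<t. \<forall>j<t. i \<noteq> j \<longrightarrow> set (Q i) \<inter> set (Q j) = {})"
proof -
  have g: "graph V E" and bB: "bramble V E B" by fact+
  have finV: "finite V" using g unfolding graph_def by blast
  have BV: "\<forall>X\<in>B. X \<inter> V \<noteq> {}"
    using conn_ne[OF bramble_conn[OF bB]] conn_sub[OF bramble_conn[OF bB]] by blast
  have rV: "\<forall>X\<in>restrict_bramble B S. X \<inter> V \<noteq> {}" for S using BV restrict_sub by blast
  have ordB: "2 * t + 1 \<le> bramble_order V B" by fact
  have "B \<noteq> {}"
  proof
    assume "B = {}"
    then show False using ordB finV by simp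
  qed
  obtain P0 where P0: "is_path V E P0" "\<forall>X\<in>B. X \<inter> set P0 \<noteq> {}"
    using path_hits_all[OF g bB \<open>B \<noteq> {}\<close>] by blast
  have "restrict_bramble B (set P0) = B" using P0(2) unfolding restrict_bramble_def by blast
  then have "t \<le> bramble_order V (restrict_bramble B (set P0))" using ordB by simp
  then obtain n where n: "1 \<le> n" "n \<le> length P0" "bramble_order V (restrict_bramble B (set (take n P0))) = t"
    using prefix_order[OF finV BV P0(1) _ assms(3)] by blast
  define P1 where "P1 = take n P0"
  have "is_path V E (take n P0 @ drop n P0)" using P0(1) by simp
  moreover have "take n P0 \<noteq> []" using n(1,2) by (cases P0) auto
  ultimately have P1: "is_path V E P1" unfolding P1_def by (rule is_path_prefix)
  have o1: "bramble_order V (restrict_bramble B (set P1)) = t" using n(3) unfolding P1_def .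
  define B' where "B' = {Y\<in>B. Y \<inter> set P1 = {}}"
  have Bu: "restrict_bramble B (set P1) \<union> B' = B" unfolding B'_def restrict_bramble_def by blast
  have B'V: "\<forall>X\<in>B'. X \<inter> V \<noteq> {}" using BV unfolding B'_def by blast
  have "bramble_order V (restrict_bramble B (set P1) \<union> B') \<le> bramble_order V (restrict_bramble B (set P1)) + bramble_order V B'"
    by (rule order_Un[OF finV rV B'V])
  then have "bramble_order V B \<le> t + bramble_order V B'" unfolding Bu o1 .
  then have oB': "t + 1 \<le> bramble_order V B'" using ordB by simp
  have "B' \<noteq> {}"
  proof
    assume "B' = {}"
    then show False using oB' finV by simp
  qed
  define V' where "V' = V - set P1"
  define E' where "E' = (\<lambda>u v. E u v \<and> u \<in> V' \<and> v \<in> V')"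
  have g': "graph V' E'" using g unfolding graph_def E'_def V'_def by auto
  have B'sub: "X \<subseteq> V'" if "X \<in> B'" for X
    using that conn_sub[OF bramble_conn[OF bB]] unfolding B'_def V'_def by blast
  have bB': "bramble V' E' B'" unfolding bramble_def
  proof (intro conjI ballI)
    fix X assume "X \<in> B'"
    then show "connected_set V' E' X" unfolding E'_def
      using conn_restrict[OF bramble_conn[OF bB] B'sub] unfolding B'_def by blast
  next
    fix X Y assume XY: "X \<in> B'" "Y \<in> B'"
    then have "touch E X Y" using bramble_touch[OF bB] unfolding B'_def by blast
    then show "touch E' X Y" unfolding E'_def using touch_restrict B'sub XY by blast
  qed
  obtain P' where P': "is_path V' E' P'" "\<forall>X\<in>B'. X \<inter> set P' \<noteq> {}"
    using path_hits_all[OF g' bB' \<open>B' \<noteq> {}\<close>] by blast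
  have P'G: "is_path V E P'" by (rule is_path_mono[OF P'(1)]) (auto simp: V'_def E'_def)
  have P'd: "set P' \<inter> set P1 = {}" using P'(1) unfolding is_path_alt V'_def by blast
  have "B' \<subseteq> restrict_bramble B (set P')" using P'(2) unfolding B'_def restrict_bramble_def by blast
  then have "bramble_order V B' \<le> bramble_order V (restrict_bramble B (set P'))"
    by (rule order_mono[OF finV rV])
  then have "t \<le> bramble_order V (restrict_bramble B (set P'))" using oB' by simp
  then obtain m where m: "1 \<le> m" "m \<le> length P'" "bramble_order V (restrict_bramble B (set (take m P'))) = t"
    using prefix_order[OF finV BV P'G _ assms(3)] by blast
  define P2 where "P2 = take m P'"
  have "is_path V E (take m P' @ drop m P')" using P'G by simp
  moreover have "take m P' \<noteq> []" using m(1,2) by (cases P') auto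
  ultimately have P2: "is_path V E P2" unfolding P2_def by (rule is_path_prefix)
  have o2: "bramble_order V (restrict_bramble B (set P2)) = t" using m(3) unfolding P2_def .
  have d12: "set P1 \<inter> set P2 = {}" using P'd set_take_subset[of m P'] unfolding P2_def by blast
  have msep: "\<forall>S. S \<subseteq> V \<and> sep V E (set P1) (set P2) S \<longrightarrow> t \<le> card S"
  proof (intro allI impI)
    fix S assume S: "S \<subseteq> V \<and> sep V E (set P1) (set P2) S"
    show "t \<le> card S"
    proof (rule ccontr)
      assume lt: "\<not> t \<le> card S"
      have "\<not> hitting_set V (restrict_bramble B (set P1)) S"
        using order_le_card[OF finV] o1 lt by metis
      then obtain X where X: "X \<in> B" "X \<inter> set P1 \<noteq> {}" "S \<inter> X = {}"
        using S unfolding hitting_set_def restrict_bramble_def by blast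
      have "\<not> hitting_set V (restrict_bramble B (set P2)) S"
        using order_le_card[OF finV] o2 lt by metis
      then obtain Y where Y: "Y \<in> B" "Y \<inter> set P2 \<noteq> {}" "S \<inter> Y = {}"
        using S unfolding hitting_set_def restrict_bramble_def by blast
      obtain a where a: "a \<in> X" "a \<in> set P1" using X(2) by blast
      obtain b where b: "b \<in> Y" "b \<in> set P2" using Y(2) by blast
      obtain p where p: "is_path V E p" "hd p = a" "last p = b" "set p \<subseteq> X \<union> Y"
        using conn_touch_path[OF bramble_conn[OF bB X(1)] bramble_conn[OF bB Y(1)]
            bramble_touch[OF bB X(1) Y(1)] a(1) b(1)] by blast
      have "set p \<inter> S = {}" using p(4) X(3) Y(3) by blast
      moreover have "set p \<inter> S \<noteq> {}" using S p a(2) b(2) unfolding sep_def by blast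
      ultimately show False by blast
    qed
  qed
  obtain PP where PP: "pathsys V E (set P1) (set P2) PP t" using menger[OF g msep] by blast
  obtain QQ where QQ: "pathsys V E (set P1) (set P2) QQ t"
    and QQt: "\<forall>q\<in>QQ. set (tl q) \<inter> set P1 = {} \<and> set (butlast q) \<inter> set P2 = {}"
    using trim_sys[OF PP] by blast
  have "finite QQ" "card QQ = t" using QQ unfolding pathsys_def by blast+
  then obtain h where h: "bij_betw h {0..<t} QQ" using ex_bij_betw_nat_finite by blast
  have hQ: "h i \<in> QQ" if "i < t" for i using h that unfolding bij_betw_def by auto
  have props: "is_path V E (h i) \<and>
        ((hd (h i) \<in> set P1 \<and> last (h i) \<in> set P2) \<or>
         (hd (h i) \<in> set P2 \<and> last (h i) \<in> set P1)) \<and>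
        inner_vertices (h i) \<inter> (set P1 \<union> set P2) = {}" if "i < t" for i
  proof -
    have q: "h i \<in> QQ" using hQ[OF that] .
    have a: "is_path V E (h i)" "hd (h i) \<in> set P1" "last (h i) \<in> set P2"
      using QQ q unfolding pathsys_def by blast+
    have "set (butlast (tl (h i))) \<subseteq> set (tl (h i))" by (auto dest: in_set_butlastD)
    moreover have "set (butlast (tl (h i))) \<subseteq> set (butlast (h i))"
      unfolding butlast_tl by (cases "butlast (h i)") auto
    ultimately have "inner_vertices (h i) \<inter> (set P1 \<union> set P2) = {}"
      using QQt q unfolding inner_vertices_def by blast
    then show ?thesis using a by blast
  qed
  have disj: "set (h i) \<inter> set (h j) = {}" if "i < t" "j < t" "i \<noteq> j" for i j
  proof -
    have "h i \<noteq> h j" using h that unfolding bij_betw_def inj_on_def by auto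
    then show ?thesis using QQ hQ that unfolding pathsys_def by blast
  qed
  show ?thesis
    apply (rule exI[of _ P1], rule exI[of _ P2], rule exI[of _ h])
    using P1 P2 d12 o1 o2 props disj by blast
qed

end
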